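(* Let $I$ be an ideal on $\mathbb{N}$ with $\mathrm{Fin}\subseteq I$ and $I\neq\mathrm{Fin}$, and suppose there is an infinite set $C\subseteq\mathbb{N}$ such that every $D\subseteq C$ with $D\in I$ is finite and $\mathbb{N}\setminus C\in I$ (e.g. $C$ witnessing that $I$ has the supset property). Then there exists $(x_n)\in\ell_1^{*}$ such that $A(x_n)$ is a closed interval and $A_I(x_n)$ is meager and Lebesgue null.
   Context: $\ell_1^{*}=\{(x_n)\in\ell_1 : x_n\neq 0\text{ for every }n\}$. An ideal on $\mathbb{N}$ is a family $I\subseteq P(\mathbb{N})$ closed under finite unions and subsets with $\mathbb{N}\notin I$; $\mathrm{Fin}$ is the ideal of finite sets. An ideal is dense if every infinite set has an infinite subset in $I$. For a non-dense ideal $I$ and an infinite $A$ all of whose subsets belonging to $I$ are finite, $I$ has the supset property if there exists $C\supseteq A$ such that every $D\subseteq C$ with $D\in I$ is finite and $\mathbb{N}\setminus C\in I$. $A(x_n)=\{\sum_{n\in A}x_n : A\subseteq\mathbb{N}\}$, $A_I(x_n)=\{\sum_{n\in A}x_n : A\in I\}$. *)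

theory Defs
  imports "HOL-Analysis.Analysis"
begin

definition is_ideal :: "nat set set \<Rightarrow> bool" where
  "is_ideal I \<longleftrightarrow> (\<forall>A\<in>I. \<forall>B\<in>I. A \<union> B \<in> I) \<and> (\<forall>A\<in>I. \<forall>B. B \<subseteq> A \<longrightarrow> B \<in> I) \<and> UNIV \<notin> I"

definition Fin :: "nat set set" where
  "Fin = {A. finite A}"

definition subsum :: "(nat \<Rightarrow> real) \<Rightarrow> nat set \<Rightarrow> real" where
  "subsum x A = (\<Sum>n. if n \<in> A then x n else 0)"

definition ell1_star :: "(nat \<Rightarrow> real) set" where
  "ell1_star = {x. summable (\<lambda>n. \<bar>x n\<bar>) \<and> (\<forall>n. x n \<noteq> 0)}"

definition achievement_set :: "(nat \<Rightarrow> real) \<Rightarrow> real set" where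
  "achievement_set x = subsum x ` UNIV"

definition ideal_achievement_set :: "nat set set \<Rightarrow> (nat \<Rightarrow> real) \<Rightarrow> real set" where
  "ideal_achievement_set I x = subsum x ` I"

definition nowhere_dense :: "real set \<Rightarrow> bool" where
  "nowhere_dense S \<longleftrightarrow> interior (closure S) = {}"

definition meager :: "real set \<Rightarrow> bool" where
  "meager S \<longleftrightarrow> (\<exists>F :: nat \<Rightarrow> real set. (\<forall>n. nowhere_dense (F n)) \<and> S \<subseteq> (\<Union>n. F n))"

end

theory Submission imports Defs "HOL-Library.Nat_Bijection" begin

definition xx :: "nat \<Rightarrow> real" where "xx n = (1/2)^Suc n"

lemma floor_bit: "floor (2*(y::real)) - 2 * floor y \<in> {0,1}"
proof -
  have a: "2 * floor y \<le> floor (2*y)" by (subst le_floor_iff) (use of_int_floor_le[of y] in simp)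
  have b: "floor (2*y) < 2 * floor y + 2" by (subst floor_less_iff) (simp, linarith)
  from a b show ?thesis by auto
qed

lemma xx_pos: "xx n > 0" unfolding xx_def by simp

lemma xx_sums: "xx sums 1" unfolding xx_def using power_half_series by simp

lemma summable_mask: "summable (\<lambda>n. if n \<in> A then xx n else 0)"
  by (rule summable_comparison_test[OF _ sums_summable[OF xx_sums]])
     (auto intro!: exI[of _ 0] simp: less_imp_le[OF xx_pos])

lemma subsum_range: "subsum xx A \<in> {0..1}"
proof -
  have "0 \<le> subsum xx A" unfolding subsum_def
    by (rule suminf_nonneg[OF summable_mask]) (simp add: less_imp_le[OF xx_pos])
  moreover have "subsum xx A \<le> suminf xx" unfolding subsum_def
    by (rule suminf_le[OF _ summable_mask sums_summable[OF xx_sums]])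
       (simp add: less_imp_le[OF xx_pos])
  ultimately show ?thesis using sums_unique[OF xx_sums] by simp
qed

lemma subsum_onto:
  assumes "t \<in> {0..1::real}" shows "\<exists>A. subsum xx A = t"
proof (cases "t = 1")
  case True
  then show ?thesis using sums_unique[OF xx_sums] by (auto simp: subsum_def intro!: exI[of _ UNIV])
next
  case False
  with assms have t: "0 \<le> t" "t < 1" by auto
  define f where "f n = floor (t * 2^n)" for n
  define A where "A = {n. f (Suc n) - 2 * f n = 1}"
  have fS: "f (Suc n) = 2 * f n + (if n \<in> A then 1 else 0)" for n
  proof -
    have "f (Suc n) - 2 * f n \<in> {0,1}"
      unfolding f_def using floor_bit[of "t*2^n"] by (simp add: mult_ac)
    then show ?thesis unfolding A_def by auto
  qed
  have f0: "f 0 = 0" unfolding f_def using t by (simp add: floor_eq_iff)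
  have ps: "(\<Sum>k<n. if k \<in> A then xx k else 0) = f n / 2^n" for n
  proof (induction n)
    case 0 then show ?case by (simp add: f0)
  next
    case (Suc n)
    show ?case using Suc by (simp add: fS xx_def field_simps)
  qed
  have bnd: "\<bar>f n / 2^n - t\<bar> \<le> (1/2)^n" for n
  proof -
    have "of_int (f n) \<le> t * 2^n" "t * 2^n < of_int (f n) + 1" unfolding f_def by linarith+
    then have "\<bar>of_int (f n) - t * 2^n\<bar> \<le> 1" by linarith
    then have "\<bar>of_int (f n) - t * 2^n\<bar> / 2^n \<le> 1 / 2^n" by (simp add: divide_right_mono)
    moreover have "\<bar>of_int (f n) - t * 2^n\<bar> / 2^n = \<bar>f n / 2^n - t\<bar>"
      by (simp add: field_simps abs_div_pos[symmetric])
    ultimately show ?thesis by (simp add: power_one_over)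
  qed
  have "(\<lambda>n. f n / 2^n) \<longlonglongrightarrow> t"
  proof -
    have "(\<lambda>n. (1/2::real)^n) \<longlonglongrightarrow> 0" by (rule LIMSEQ_realpow_zero) auto
    then have "(\<lambda>n. f n / 2^n - t) \<longlonglongrightarrow> 0"
      by (rule Lim_null_comparison[rotated]) (use bnd in simp)
    then show ?thesis by (simp add: LIM_zero_iff)
  qed
  then have "(\<lambda>n. if n \<in> A then xx n else 0) sums t" unfolding sums_def ps .
  then show ?thesis unfolding subsum_def by (auto dest: sums_unique)
qed

definition KN :: "nat set \<Rightarrow> nat \<Rightarrow> real set" where
  "KN C N = (\<Union>S\<in>Pow ({..<N} - C). {sum xx S .. sum xx S + (1/2)^N})"

lemma tail_bound: "(\<Sum>n. xx (n + N)) = (1/2)^N"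
proof -
  have "(\<lambda>n. (1/2)^N * xx n) sums ((1/2)^N * 1)" by (rule sums_mult[OF xx_sums])
  then show ?thesis by (simp add: xx_def power_add sums_unique[symmetric] mult_ac)
qed

lemma in_KN:
  assumes "B \<inter> C = {}" shows "subsum xx B \<in> KN C N"
proof -
  let ?g = "\<lambda>n. if n \<in> B then xx n else 0"
  have sp: "subsum xx B = (\<Sum>n. ?g (n + N)) + (\<Sum>i<N. ?g i)"
    unfolding subsum_def by (rule suminf_split_initial_segment[OF summable_mask])
  have fin: "(\<Sum>i<N. ?g i) = sum xx ({..<N} \<inter> B)"
    by (simp add: sum.inter_restrict)
  have sg: "summable (\<lambda>n. ?g (n + N))" using summable_mask[of B] by (subst summable_iff_shift)
  have sx: "summable (\<lambda>n. xx (n + N))" using sums_summable[OF xx_sums] by (subst summable_iff_shift)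
  have t0: "0 \<le> (\<Sum>n. ?g (n + N))" by (rule suminf_nonneg[OF sg]) (simp add: less_imp_le[OF xx_pos])
  have t1: "(\<Sum>n. ?g (n + N)) \<le> (1/2)^N" unfolding tail_bound[symmetric]
    by (rule suminf_le[OF _ sg sx]) (simp add: less_imp_le[OF xx_pos])
  have "{..<N} \<inter> B \<in> Pow ({..<N} - C)" using assms by auto
  then show ?thesis unfolding KN_def sp fin using t0 t1 by (auto intro!: bexI[of _ "{..<N} \<inter> B"])
qed

lemma KN_closed: "closed (KN C N)" unfolding KN_def by (intro closed_UN) auto

lemma KN_meas: "KN C N \<in> lmeasurable" unfolding KN_def by (intro fmeasurable.finite_UN) auto

lemma KN_measure: "measure lebesgue (KN C N) \<le> (1/2)^card (C \<inter> {..<N})"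
proof -
  let ?D = "{..<N} - C"
  have "measure lebesgue (KN C N) \<le> (\<Sum>S\<in>Pow ?D. measure lebesgue {sum xx S .. sum xx S + (1/2)^N})"
    unfolding KN_def by (intro measure_UNION_le) auto
  also have "\<dots> = card (Pow ?D) * (1/2)^N" by simp
  also have "\<dots> = 2^card ?D * (1/2)^N" by (simp add: card_Pow)
  also have "\<dots> = (1/2)^card (C \<inter> {..<N})"
  proof -
    have "card ?D + card (C \<inter> {..<N}) = N"
    proof -
      have le: "card ({..<N} \<inter> C) \<le> N" by (metis card_lessThan card_mono finite_lessThan inf_le1)
      have "card ?D = N - card ({..<N} \<inter> C)" using card_Diff_subset_Int[of "{..<N}" C] by simp
      then show ?thesis using le by (simp add: Int_commute)
    qed
    then have "(1/2::real)^N = (1/2)^card ?D * (1/2)^card (C \<inter> {..<N})"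
      by (metis power_add)
    then show ?thesis by (simp add: power_one_over)
  qed
  finally show ?thesis .
qed

definition KK :: "nat set \<Rightarrow> real set" where "KK C = (\<Inter>N. KN C N)"

lemma KK_closed: "closed (KK C)" unfolding KK_def using KN_closed by blast

lemma KK_negl: assumes "infinite C" shows "negligible (KK C)"
proof (subst negligible_outer_le, intro allI impI)
  fix e :: real assume e: "e > 0"
  obtain m where m: "(1/2::real)^m < e" using real_arch_pow_inv[OF e, of "1/2"] by auto
  obtain S where S: "finite S" "card S = m" "S \<subseteq> C" using infinite_arbitrarily_large[OF assms] by blast
  obtain k where k: "S \<subseteq> {..<k}" using finite_nat_bounded[OF S(1)] by blast
  have "m \<le> card (C \<inter> {..<k})" using S k by (metis card_mono finite_Int finite_lessThan le_inf_iff)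
  then have "(1/2::real)^card (C \<inter> {..<k}) \<le> (1/2)^m" by (intro power_decreasing) auto
  then have "measure lebesgue (KN C k) \<le> e" using KN_measure[of C k] m by linarith
  moreover have "KK C \<subseteq> KN C k" unfolding KK_def by blast
  ultimately show "\<exists>T. KK C \<subseteq> T \<and> T \<in> lmeasurable \<and> measure lebesgue T \<le> e"
    using KN_meas by blast
qed

lemma in_KK: "B \<inter> C = {} \<Longrightarrow> subsum xx B \<in> KK C"
  unfolding KK_def using in_KN by blast

lemma subsum_finite: "finite F \<Longrightarrow> subsum xx F = sum xx F"
  unfolding subsum_def by (subst suminf_finite[of F]) (auto intro: sum.cong)

lemma subsum_split: "subsum xx A = subsum xx (A \<inter> C) + subsum xx (A - C)"
proof -
  have "subsum xx (A \<inter> C) + subsum xx (A - C) =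
     (\<Sum>n. (if n \<in> A \<inter> C then xx n else 0) + (if n \<in> A - C then xx n else 0))"
    unfolding subsum_def by (rule suminf_add[OF summable_mask summable_mask])
  also have "\<dots> = subsum xx A" unfolding subsum_def by (rule suminf_cong) auto
  finally show ?thesis by simp
qed

lemma closed_negl_nd: "closed S \<Longrightarrow> negligible S \<Longrightarrow> nowhere_dense S"
  unfolding nowhere_dense_def
  by (metis closure_closed interior_subset negligible_subset open_interior open_not_negligible)


theorem mainTheorem15:
  fixes I :: "nat set set" and C :: "nat set"
  assumes "is_ideal I" and "Fin \<subseteq> I" and "I \<noteq> Fin"
    and "infinite C"
    and "\<forall>D. D \<subseteq> C \<and> D \<in> I \<longrightarrow> finite D"
    and "UNIV - C \<in> I"
  shows "\<exists>x \<in> ell1_star. (\<exists>a b. a < b \<and> achievement_set x = {a..b})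
           \<and> meager (ideal_achievement_set I x)
           \<and> ideal_achievement_set I x \<in> null_sets lebesgue"
proof (intro bexI conjI)
  show "xx \<in> ell1_star" unfolding ell1_star_def
    using sums_summable[OF xx_sums] xx_pos by (auto simp: less_imp_le[OF xx_pos]) (metis less_irrefl)
  show "\<exists>a b. a < b \<and> achievement_set xx = {a..b}"
    by (rule exI[of _ 0], rule exI[of _ 1]) (use subsum_range in \<open>auto simp: achievement_set_def dest: subsum_onto\<close>)
  define Fs where "Fs n = (+) (sum xx (set_decode n)) ` KK C" for n
  have cover: "ideal_achievement_set I xx \<subseteq> (\<Union>n. Fs n)"
  proof
    fix y assume "y \<in> ideal_achievement_set I xx"
    then obtain A where A: "A \<in> I" "y = subsum xx A" unfolding ideal_achievement_set_def by auto
    have "A \<inter> C \<in> I" using assms(1) A(1) unfolding is_ideal_def by blast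
    then have fin: "finite (A \<inter> C)" using assms(5) by blast
    have "y = sum xx (A \<inter> C) + subsum xx (A - C)"
      using A(2) subsum_split[of A C] subsum_finite[OF fin] by simp
    moreover have "subsum xx (A - C) \<in> KK C" by (rule in_KK) auto
    ultimately have "y \<in> Fs (set_encode (A \<inter> C))" unfolding Fs_def using fin by auto
    then show "y \<in> (\<Union>n. Fs n)" by blast
  qed
  have negl: "negligible (Fs n)" for n
    unfolding Fs_def by (rule negligible_translation[OF KK_negl[OF assms(4)]])
  have cl: "closed (Fs n)" for n
    unfolding Fs_def by (rule closed_translation[OF KK_closed])
  show "meager (ideal_achievement_set I xx)" unfolding meager_def
    using cover closed_negl_nd[OF cl negl] by blast
  have "negligible (\<Union>n. Fs n)" by (rule negligible_Union_nat[OF negl])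
  then have "negligible (ideal_achievement_set I xx)" using cover negligible_subset by blast
  then show "ideal_achievement_set I xx \<in> null_sets lebesgue" by (simp add: negligible_iff_null_sets)
qed

end
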